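(* Let $r\ge1$ and $t,s\ge0$ be integers. For every $\mathbf{u}=(u_1,\dots,u_r)\in\mathbb{Z}_+^r$ with $u_i\ge s+1$ for all $i\in\{1,\dots,r\}$, we have $|\mathcal{A}_{t,s}(\mathbf{u})|=A_{t,s}(r)$.
   Context: For $\mathbf{u}\in\mathbb{Z}_+^r$ (positive integers), $\mathcal{A}_{t,s}(\mathbf{u})=\{\mathbf{v}\in\mathbb{Z}_+^r:\ \sum_{i=1}^r\max\{0,u_i-v_i\}\le s,\ \sum_{i=1}^r\max\{0,v_i-u_i\}\le t\}$. The numbers $A_{t,s}(r)$ (integers $t,s$, $r\ge1$) are defined by: $A_{t,s}(r)=0$ if $t<0$ or $s<0$; $A_{t,s}(1)=t+s+1$ for $t,s\ge0$; for $r\ge2$, $t,s\ge0$: $A_{t,s}(r)=\sum_{i=1}^{t}A_{t-i,s}(r-1)+\sum_{i=1}^{s}A_{t,s-i}(r-1)+A_{t,s}(r-1)$. *)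

theory Defs
  imports Main
begin

text \<open>Vectors in Z_+^r are represented as integer lists of length r with positive entries.\<close>

definition Aset :: "int \<Rightarrow> int \<Rightarrow> int list \<Rightarrow> int list set" where
  "Aset t s u = {v. length v = length u \<and> (\<forall>i<length v. v ! i > 0) \<and>
      (\<Sum>i<length u. max 0 (u ! i - v ! i)) \<le> s \<and>
      (\<Sum>i<length u. max 0 (v ! i - u ! i)) \<le> t}"

fun Anum :: "int \<Rightarrow> int \<Rightarrow> nat \<Rightarrow> int" where
  "Anum t s 0 = 0"
| "Anum t s (Suc 0) = (if t < 0 \<or> s < 0 then 0 else t + s + 1)"
| "Anum t s (Suc (Suc n)) = (if t < 0 \<or> s < 0 then 0 else
      (\<Sum>i\<in>{1..t}. Anum (t - i) s (Suc n)) + (\<Sum>i\<in>{1..s}. Anum t (s - i) (Suc n))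
      + Anum t s (Suc n))"

end

theory Submission
  imports Defs
begin

fun C :: "int \<Rightarrow> int \<Rightarrow> nat \<Rightarrow> int" where
  "C t s 0 = (if t < 0 \<or> s < 0 then 0 else 1)"
| "C t s (Suc n) = (if t < 0 \<or> s < 0 then 0 else
      (\<Sum>i\<in>{1..t}. C (t - i) s n) + (\<Sum>i\<in>{1..s}. C t (s - i) n) + C t s n)"

lemma C_Anum: "n \<ge> 1 \<Longrightarrow> C t s n = Anum t s n"
proof (induction n arbitrary: t s rule: less_induct)
  case (less n)
  then obtain m where m: "n = Suc m" by (cases n) auto
  show ?case
  proof (cases m)
    case 0
    have "(\<Sum>i\<in>{1..t}. (1::int)) = max 0 t" by simp
    moreover have "(\<Sum>i\<in>{1..s}. (1::int)) = max 0 s" by simp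
    ultimately show ?thesis using m 0 by auto
  next
    case (Suc k)
    have "C a b m = Anum a b m" for a b using less.IH[of m a b] m Suc by simp
    then show ?thesis using m Suc by (simp del: C.simps(2) Anum.simps) (simp only: C.simps Anum.simps)
  qed
qed

lemma sum_nonneg_max: "(0::int) \<le> (\<Sum>i<n. max 0 (f i))"
  by (rule sum_nonneg) simp

lemma Aset_neg: assumes "t < 0 \<or> s < 0" shows "Aset t s u = {}"
proof -
  have "\<not> (a \<le> s \<and> b \<le> t)" if "0 \<le> a" "0 \<le> b" for a b :: int
    using that assms by linarith
  note h = this[OF sum_nonneg_max sum_nonneg_max]
  show ?thesis
  proof (rule equals0I)
    fix v assume "v \<in> Aset t s u"
    then have a: "(\<Sum>i<length u. max 0 (u ! i - v ! i)) \<le> s"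
      and b: "(\<Sum>i<length u. max 0 (v ! i - u ! i)) \<le> t"
      unfolding Aset_def by simp_all
    show False using h[of "\<lambda>i. u ! i - v ! i" "length u" "\<lambda>i. v ! i - u ! i" "length u"] a b
      by simp
  qed
qed

lemma Aset_Nil: "Aset t s [] = (if t < 0 \<or> s < 0 then {} else {[]})"
  unfolding Aset_def by auto

lemma all_less_Suc': "(\<forall>i<Suc n. P i) = (P 0 \<and> (\<forall>i<n. P (Suc i)))"
  by (auto simp: less_Suc_eq_0_disj)

lemma Aset_Cons_mem: "(y # v \<in> Aset t s (x # u)) =
   (y > 0 \<and> v \<in> Aset (t - max 0 (y - x)) (s - max 0 (x - y)) u)"
proof -
  have s1: "(\<Sum>i<length (x#u). max 0 ((x#u) ! i - (y#v) ! i)) =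
     (\<Sum>i<length u. max 0 (u ! i - v ! i)) + max 0 (x - y)"
    by (simp only: length_Cons sum.lessThan_Suc_shift nth_Cons_0 nth_Cons_Suc add.commute)
  have s2: "(\<Sum>i<length (x#u). max 0 ((y#v) ! i - (x#u) ! i)) =
     (\<Sum>i<length u. max 0 (v ! i - u ! i)) + max 0 (y - x)"
    by (simp only: length_Cons sum.lessThan_Suc_shift nth_Cons_0 nth_Cons_Suc add.commute)
  have p: "(\<forall>i<length (y#v). (y#v) ! i > 0) = (y > 0 \<and> (\<forall>i<length v. v ! i > 0))"
    by (simp only: length_Cons all_less_Suc' nth_Cons_0 nth_Cons_Suc)
  show ?thesis unfolding Aset_def mem_Collect_eq s1 s2 p
    by (simp only: length_Cons Suc_inject le_diff_eq) blast
qed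

lemma Aset_Cons: "Aset t s (x # u) =
   {y # v |y v. y > 0 \<and> v \<in> Aset (t - max 0 (y - x)) (s - max 0 (x - y)) u}"
proof (intro set_eqI iffI)
  fix w assume w: "w \<in> Aset t s (x # u)"
  then obtain y v where wv: "w = y # v" unfolding Aset_def by (cases w) auto
  from w show "w \<in> {y # v |y v. y > 0 \<and> v \<in> Aset (t - max 0 (y - x)) (s - max 0 (x - y)) u}"
    unfolding wv Aset_Cons_mem by blast
next
  fix w assume "w \<in> {y # v |y v. y > 0 \<and> v \<in> Aset (t - max 0 (y - x)) (s - max 0 (x - y)) u}"
  then obtain y v where wv: "w = y # v" "y > 0" "v \<in> Aset (t - max 0 (y - x)) (s - max 0 (x - y)) u"
    by blast
  then show "w \<in> Aset t s (x # u)"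
    unfolding wv Aset_Cons_mem by blast
qed

lemma sum_split:
  fixes t s :: int and f :: "int \<Rightarrow> int"
  assumes "t \<ge> 0" "s \<ge> 0"
  shows "(\<Sum>d\<in>{-s..t}. f d) = (\<Sum>i\<in>{1..t}. f i) + (\<Sum>i\<in>{1..s}. f (- i)) + f 0"
proof -
  have e: "{-s..t} = ({1..t} \<union> {-s..-1}) \<union> {0}" using assms by auto
  have "(\<Sum>d\<in>{-s..t}. f d) = (\<Sum>i\<in>{1..t}. f i) + (\<Sum>i\<in>{-s..-1}. f i) + f 0"
    unfolding e by (subst sum.union_disjoint; simp; subst sum.union_disjoint; auto)
  moreover have "(\<Sum>i\<in>{-s..-1}. f i) = (\<Sum>i\<in>{1..s}. f (- i))"
    by (rule sum.reindex_bij_witness[of _ uminus uminus]) auto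
  ultimately show ?thesis by simp
qed

lemma main:
  "(\<forall>e\<in>set u. e \<ge> s + 1) \<Longrightarrow> finite (Aset t s u) \<and> int (card (Aset t s u)) = C t s (length u)"
proof (induction u arbitrary: t s)
  case Nil
  then show ?case by (simp add: Aset_Nil)
next
  case (Cons x u)
  show ?case
  proof (cases "t < 0 \<or> s < 0")
    case True
    then show ?thesis by (simp add: Aset_neg)
  next
    case False
    hence t0: "t \<ge> 0" and s0: "s \<ge> 0" by auto
    have x: "x \<ge> s + 1" using Cons.prems by simp
    define A where "A y = Aset (t - max 0 (y - x)) (s - max 0 (x - y)) u" for y
    have IH: "finite (A y) \<and> int (card (A y)) = C (t - max 0 (y - x)) (s - max 0 (x - y)) (length u)" for y
      unfolding A_def using Cons.prems by (intro Cons.IH) auto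
    have eq: "Aset t s (x # u) = (\<Union>y\<in>{x-s..x+t}. Cons y ` A y)"
    proof (intro set_eqI iffI)
      fix w assume "w \<in> Aset t s (x # u)"
      then obtain y v where w: "w = y # v" "y > 0" "v \<in> A y"
        unfolding Aset_Cons A_def by blast
      have "\<not> (t - max 0 (y - x) < 0 \<or> s - max 0 (x - y) < 0)"
        using w(3) Aset_neg unfolding A_def by blast
      hence "y \<in> {x-s..x+t}" by auto
      thus "w \<in> (\<Union>y\<in>{x-s..x+t}. Cons y ` A y)" using w by blast
    next
      fix w assume "w \<in> (\<Union>y\<in>{x-s..x+t}. Cons y ` A y)"
      then obtain y v where w: "w = y # v" "y \<in> {x-s..x+t}" "v \<in> A y" by blast
      have "y > 0" using w(2) x by auto
      thus "w \<in> Aset t s (x # u)" unfolding Aset_Cons A_def using w unfolding A_def by blast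
    qed
    have fin: "finite (Aset t s (x # u))" unfolding eq using IH by auto
    have "card (Aset t s (x # u)) = (\<Sum>y\<in>{x-s..x+t}. card (Cons y ` A y))"
      unfolding eq by (rule card_UN_disjoint) (use IH in auto)
    also have "\<dots> = (\<Sum>y\<in>{x-s..x+t}. card (A y))"
      by (rule sum.cong) (auto simp: card_image)
    finally have "int (card (Aset t s (x # u))) = (\<Sum>y\<in>{x-s..x+t}. int (card (A y)))"
      by simp
    also have "\<dots> = (\<Sum>y\<in>{x-s..x+t}. C (t - max 0 (y - x)) (s - max 0 (x - y)) (length u))"
      using IH by simp
    also have "\<dots> = (\<Sum>d\<in>{-s..t}. C (t - max 0 d) (s - max 0 (- d)) (length u))"
      by (rule sum.reindex_bij_witness[of _ "\<lambda>d. x + d" "\<lambda>y. y - x"]) auto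
    also have "\<dots> = (\<Sum>i\<in>{1..t}. C (t - i) s (length u)) + (\<Sum>i\<in>{1..s}. C t (s - i) (length u))
        + C t s (length u)"
      unfolding sum_split[OF t0 s0]
      by (intro arg_cong2[where f = "(+)"] sum.cong) auto
    also have "\<dots> = C t s (length (x # u))" using t0 s0 by simp
    finally show ?thesis using fin by simp
  qed
qed

theorem lemma2:
  fixes r :: nat and t s :: int and u :: "int list"
  assumes "r \<ge> 1" and "t \<ge> 0" and "s \<ge> 0"
    and "length u = r" and "\<forall>i<r. u ! i \<ge> s + 1"
  shows "int (card (Aset t s u)) = Anum t s r"
proof -
  have "\<forall>e\<in>set u. e \<ge> s + 1" using assms(4,5) by (auto simp: in_set_conv_nth)
  from main[OF this] have "int (card (Aset t s u)) = C t s r" using assms(4) by simp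
  also have "\<dots> = Anum t s r" using C_Anum assms(1) by simp
  finally show ?thesis .
qed

end
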